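(* Fix integers $d,n$ with $2\leq n\leq d+1$, and real numbers $\tau,c>0$. Every $n$-point configuration $X=\{x_i\}_{i\in[n]}$ in the unit sphere $S^{d-1}\subseteq\mathbb{R}^d$ that minimizes $\mathcal{L}_{\tau,c}(X):=\sum_{k=1}^n\log\big(c+\sum_{j\neq k}\exp(\langle x_j,x_k\rangle/\tau)\big)$ satisfies $\sum_{i=1}^n x_i=0$ and $\langle x_i,x_j\rangle=-\frac{1}{n-1}$ for all $i\neq j$ in $[n]$.
   Context: $[n]=\{1,\ldots,n\}$; minimization is over all $n$-point configurations in $S^{d-1}$. *)

theory Defs
  imports "HOL-Analysis.Analysis"
begin

definition sphere_config :: "nat \<Rightarrow> (nat \<Rightarrow> real ^ 'd) \<Rightarrow> bool" where
  "sphere_config n X \<longleftrightarrow> (\<forall>i\<in>{1..n}. norm (X i) = 1)"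

definition loss :: "real \<Rightarrow> real \<Rightarrow> nat \<Rightarrow> (nat \<Rightarrow> real ^ 'd) \<Rightarrow> real" where
  "loss \<tau> c n X = (\<Sum>k=1..n. ln (c + (\<Sum>j\<in>{1..n}-{k}. exp (inner (X j) (X k) / \<tau>))))"

definition is_minimizer :: "real \<Rightarrow> real \<Rightarrow> nat \<Rightarrow> (nat \<Rightarrow> real ^ 'd) \<Rightarrow> bool" where
  "is_minimizer \<tau> c n X \<longleftrightarrow> sphere_config n X \<and>
     (\<forall>Y :: nat \<Rightarrow> real ^ 'd. sphere_config n Y \<longrightarrow> loss \<tau> c n X \<le> loss \<tau> c n Y)"

end

theory Submission
  imports Defs
begin

lemma exp_strict: fixes t :: real assumes "t \<noteq> 0" shows "1 + t < exp t"
proof (cases "1 + t/2 \<ge> 0")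
  case True
  have "(1 + t/2)^2 \<le> exp (t/2) ^ 2"
    using True exp_ge_add_one_self[of "t/2"] by (intro power_mono) auto
  also have "exp (t/2) ^ 2 = exp t" by (simp add: power2_eq_square flip: exp_add)
  finally have "(1 + t/2)^2 \<le> exp t" .
  moreover have "0 < t*t" using assms by (metis not_real_square_gt_zero)
  then have "1 + t < (1 + t/2)^2" by (simp add: power2_eq_square field_simps)
  ultimately show ?thesis by linarith
next
  case False
  then have "1 + t < 0" by linarith
  then show ?thesis using exp_gt_zero[of t] by linarith
qed

lemma exp_tangent: fixes z u :: real shows "exp u * (1 + z - u) \<le> exp z"
proof -
  have "exp u * (1 + (z - u)) \<le> exp u * exp (z - u)"
    by (intro mult_left_mono) auto
  thus ?thesis by (simp add: exp_diff algebra_simps)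
qed

lemma exp_tangent_eq: fixes z u :: real assumes "exp z = exp u * (1 + z - u)" shows "z = u"
proof (rule ccontr)
  assume "z \<noteq> u"
  then have "1 + (z - u) < exp (z - u)" by (intro exp_strict) auto
  then have "exp u * (1 + (z - u)) < exp u * exp (z - u)" by simp
  thus False using assms by (simp add: exp_diff)
qed

lemma h_tangent:
  fixes a c m u :: real assumes "a > 0" "c > 0"
  shows "ln (c + a * exp m) + (a * exp m / (c + a * exp m)) * (u - m) \<le> ln (c + a * exp u)"
proof -
  define B where "B = c + a * exp m"
  define p where "p = a * exp m / B"
  have B: "B > 0" using assms by (simp add: B_def add_pos_pos)
  have p0: "0 \<le> p" and p1: "p \<le> 1" using assms B by (auto simp: p_def B_def field_simps)
  have "exp ((1 - p) *\<^sub>R 0 + p *\<^sub>R (u - m)) \<le> (1 - p) * exp 0 + p * exp (u - m)"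
    using convex_onD[OF exp_convex, of p 0 "u - m"] p0 p1 by simp
  then have "exp (p * (u - m)) \<le> (1 - p) + p * exp (u - m)" by simp
  then have "B * exp (p * (u - m)) \<le> B * ((1 - p) + p * exp (u - m))"
    using B by (intro mult_left_mono) auto
  also have "B * ((1 - p) + p * exp (u - m)) = c + a * exp u"
  proof -
    have 1: "B * (1 - p) = c" using B by (simp add: p_def B_def field_simps)
    have 2: "B * p = a * exp m" using B by (simp add: p_def)
    have 3: "exp m * exp (u - m) = exp u" by (simp flip: exp_add)
    have "B * ((1 - p) + p * exp (u - m)) = B * (1 - p) + (B * p) * exp (u - m)" by (simp add: algebra_simps)
    also have "... = c + a * exp u" using 1 2 3 by (simp add: mult.assoc)
    finally show ?thesis .
  qed
  finally have "B * exp (p * (u - m)) \<le> c + a * exp u" .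
  then have "ln (B * exp (p * (u - m))) \<le> ln (c + a * exp u)"
    using B assms by (subst ln_le_cancel_iff) (auto intro: add_pos_pos)
  also have "ln (B * exp (p * (u - m))) = ln B + p * (u - m)" using B by (simp add: ln_mult)
  finally show ?thesis by (simp add: B_def p_def)
qed


lemma simplex_exists:
  assumes "2 \<le> n" "n \<le> CARD('d) + 1"
  shows "\<exists>Y :: nat \<Rightarrow> real ^ 'd. sphere_config n Y \<and>
    (\<forall>i\<in>{1..n}. \<forall>j\<in>{1..n}. i \<noteq> j \<longrightarrow> inner (Y i) (Y j) = - 1 / (real n - 1))"
proof -
  define I where "I = {1..n-1}"
  have "card I \<le> card (UNIV :: 'd set)" using assms by (simp add: I_def)
  then obtain f :: "nat \<Rightarrow> 'd" where f: "inj_on f I"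
    using card_le_inj[of I "UNIV :: 'd set"] by (auto simp: I_def)
  define e where "e i = (axis (f i) 1 :: real ^ 'd)" for i
  define s where "s = (\<Sum>i\<in>I. e i)"
  define q where "q = real n - 1"
  define r where "r = sqrt (real n)"
  define w where "w = sqrt q"
  have q: "q > 0" using assms by (simp add: q_def)
  have w: "w > 0" using q by (simp add: w_def)
  have w2: "w * w = q" using q by (simp add: w_def)
  have r2: "r * r = w * w + 1" using w2 by (simp add: r_def q_def)
  have cI: "card I = n - 1" by (simp add: I_def)
  have rcI: "real (card I) = q" using assms cI by (simp add: q_def of_nat_diff)
  have ee: "inner (e i) (e j) = (if i = j then 1 else 0)" if "i \<in> I" "j \<in> I" for i j
    using f that by (auto simp: e_def inner_axis_axis inj_on_eq_iff)
  have es: "inner (e i) s = 1" if "i \<in> I" for i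
  proof -
    have "inner (e i) s = (\<Sum>j\<in>I. inner (e i) (e j))" by (simp add: s_def inner_sum_right)
    also have "\<dots> = (\<Sum>j\<in>I. if i = j then 1 else 0)" using ee that by (intro sum.cong) auto
    also have "\<dots> = 1" using that by (simp add: I_def)
    finally show ?thesis .
  qed
  have ss: "inner s s = q"
  proof -
    have "inner s s = (\<Sum>i\<in>I. inner (e i) s)" by (simp add: s_def inner_sum_left)
    also have "\<dots> = (\<Sum>i\<in>I. 1)" using es by (intro sum.cong) auto
    finally show ?thesis using rcI by simp
  qed
  define \<alpha> where "\<alpha> = r / w"
  define \<beta> where "\<beta> = (1 - r) / (w * w * w)"
  define Y where "Y i = (if i = n then (- 1 / w) *\<^sub>R s else \<alpha> *\<^sub>R e i + \<beta> *\<^sub>R s)" for i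
  have inI: "i \<in> I" if "i \<in> {1..n}" "i \<noteq> n" for i using that by (auto simp: I_def)
  have gen: "inner (Y i) (Y j) = (if i = j then 1 else - 1 / q)" if "i \<in> {1..n}" "j \<in> {1..n}" for i j
  proof -
    have Yn: "inner (Y n) (Y n) = 1"
      using ss w w2 q by (simp add: Y_def inner_commute)
    have Yin: "inner (Y i) (Y n) = - 1 / q" "inner (Y n) (Y i) = - 1 / q" if "i \<in> I" "i \<noteq> n" for i
    proof -
      have "inner (Y i) (Y n) = (- 1 / w) * (\<alpha> * inner (e i) s + \<beta> * inner s s)"
        using that by (simp add: Y_def inner_add_left algebra_simps)
      also have "\<dots> = (- 1 / w) * (\<alpha> + \<beta> * q)" using that es ss by simp
      also have "\<dots> = - 1 / q" using w unfolding w2[symmetric] by (simp add: \<alpha>_def \<beta>_def field_simps)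
      finally show "inner (Y i) (Y n) = - 1 / q" .
      then show "inner (Y n) (Y i) = - 1 / q" by (simp add: inner_commute)
    qed
    have Yij: "inner (Y i) (Y j) = \<alpha> * \<alpha> * (if i = j then 1 else 0) + 2 * \<alpha> * \<beta> + \<beta> * \<beta> * q"
      if "i \<in> I" "j \<in> I" "i \<noteq> n" "j \<noteq> n" for i j
    proof -
      have "inner (Y i) (Y j) = \<alpha> * \<alpha> * inner (e i) (e j) + \<alpha> * \<beta> * inner (e i) s
          + \<alpha> * \<beta> * inner (e j) s + \<beta> * \<beta> * inner s s"
        using that by (simp add: Y_def inner_add_left inner_add_right algebra_simps inner_commute)
      then show ?thesis using that ee es ss by simp
    qed
    have rr: "r * (r * z) = (w * w + 1) * z" for z using r2 by (metis mult.assoc)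
    have k1: "\<alpha> * \<alpha> + 2 * \<alpha> * \<beta> + \<beta> * \<beta> * q = 1"
      using w unfolding \<alpha>_def \<beta>_def w2[symmetric] by (simp add: field_simps) (simp add: rr algebra_simps)
    have k2: "2 * \<alpha> * \<beta> + \<beta> * \<beta> * q = - 1 / q"
      using w unfolding \<alpha>_def \<beta>_def w2[symmetric] by (simp add: field_simps) (simp add: rr algebra_simps)
    show ?thesis
    proof (cases "i = n")
      case True
      then show ?thesis using Yn Yin(2)[of j] inI[of j] that by auto
    next
      case False
      show ?thesis
      proof (cases "j = n")
        case True
        then show ?thesis using False Yin(1)[of i] inI[of i] that by auto
      next
        case jn: False
        then show ?thesis using False Yij[of i j] inI that k1 k2 by auto
      qed
    qed
  qed
  show ?thesis
  proof (intro exI conjI)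
    show "sphere_config n Y" unfolding sphere_config_def using gen by (simp add: norm_eq_1)
    show "\<forall>i\<in>{1..n}. \<forall>j\<in>{1..n}. i \<noteq> j \<longrightarrow> inner (Y i) (Y j) = - 1 / (real n - 1)"
      using gen by (simp add: q_def)
  qed
qed


theorem lemma13:
  fixes X :: "nat \<Rightarrow> real ^ 'd" and n :: nat and \<tau> c :: real
  assumes "2 \<le> n" and "n \<le> CARD('d) + 1"
    and "\<tau> > 0" and "c > 0"
    and "is_minimizer \<tau> c n X"
  shows "(\<Sum>i=1..n. X i) = 0 \<and>
         (\<forall>i\<in>{1..n}. \<forall>j\<in>{1..n}. i \<noteq> j \<longrightarrow> inner (X i) (X j) = - 1 / (real n - 1))"
proof -
  note tau = \<open>\<tau> > 0\<close> and cpos = \<open>c > 0\<close>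
  define N where "N = {1..n}"
  define J where "J k = N - {k}" for k
  define q where "q = real n - 1"
  define s where "s j k = inner (X j) (X k)" for j k
  define u where "u k = (\<Sum>j\<in>J k. s j k) / (q * \<tau>)" for k
  define m where "m = - 1 / (q * \<tau>)"
  define S where "S k = (\<Sum>j\<in>J k. exp (s j k / \<tau>))" for k
  define h where "h x = ln (c + q * exp x)" for x
  define p where "p = q * exp m / (c + q * exp m)"
  have q: "q > 0" using assms by (simp add: q_def)
  have p: "p > 0" using q cpos by (simp add: p_def add_pos_pos)
  have finN: "finite N" and finJ: "finite (J k)" for k by (auto simp: N_def J_def)
  have cJ: "real (card (J k)) = q" if "k \<in> N" for k
    using that assms by (simp add: J_def N_def q_def of_nat_diff)
  have sphX: "sphere_config n X" and minX: "\<And>Y :: nat \<Rightarrow> real ^ 'd. sphere_config n Y \<Longrightarrow> loss \<tau> c n X \<le> loss \<tau> c n Y"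
    using assms(5) by (auto simp: is_minimizer_def)
  have skk: "s k k = 1" if "k \<in> N" for k
    using sphX that by (simp add: sphere_config_def N_def s_def norm_eq_1)
  have lossX: "loss \<tau> c n X = (\<Sum>k\<in>N. ln (c + S k))"
    by (simp add: loss_def N_def J_def S_def s_def)
  \<comment> \<open>upper bound from the simplex\<close>
  obtain Y :: "nat \<Rightarrow> real ^ 'd" where Y: "sphere_config n Y"
    "\<forall>i\<in>{1..n}. \<forall>j\<in>{1..n}. i \<noteq> j \<longrightarrow> inner (Y i) (Y j) = - 1 / (real n - 1)"
    using simplex_exists[OF assms(1,2)] by blast
  have lossY: "loss \<tau> c n Y = real n * h m"
  proof -
    have "loss \<tau> c n Y = (\<Sum>k\<in>N. h m)"
      unfolding loss_def N_def[symmetric]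
    proof (intro sum.cong refl)
      fix k assume k: "k \<in> N"
      have "(\<Sum>j\<in>N - {k}. exp (inner (Y j) (Y k) / \<tau>)) = (\<Sum>j\<in>J k. exp m)"
        using Y(2) k by (intro sum.cong) (auto simp: J_def N_def m_def q_def)
      also have "\<dots> = q * exp m" using cJ[OF k] by simp
      finally show "ln (c + (\<Sum>j\<in>N - {k}. exp (inner (Y j) (Y k) / \<tau>))) = h m"
        by (simp add: h_def)
    qed
    then show ?thesis by (simp add: N_def)
  qed
  define D where "D k j = exp (s j k / \<tau>) - exp (u k) * (1 + s j k / \<tau> - u k)" for k j
  have D0: "D k j \<ge> 0" for k j using exp_tangent by (simp add: D_def)
  have sumD: "(\<Sum>j\<in>J k. D k j) = S k - q * exp (u k)" if "k \<in> N" for k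
  proof -
    have "(\<Sum>j\<in>J k. D k j) = S k - (\<Sum>j\<in>J k. exp (u k) * (1 + s j k / \<tau> - u k))"
      by (simp add: D_def S_def sum_subtractf)
    also have "(\<Sum>j\<in>J k. exp (u k) * (1 + s j k / \<tau> - u k))
        = exp (u k) * (real (card (J k)) + (\<Sum>j\<in>J k. s j k) / \<tau> - real (card (J k)) * u k)"
      by (simp add: sum_distrib_left[symmetric] sum.distrib sum_subtractf sum_divide_distrib)
    also have "real (card (J k)) + (\<Sum>j\<in>J k. s j k) / \<tau> - real (card (J k)) * u k = q"
      using cJ[OF that] q tau by (simp add: u_def field_simps)
    finally show ?thesis by simp
  qed
  have Sge: "q * exp (u k) \<le> S k" if "k \<in> N" for k
    using sumD[OF that] sum_nonneg[of "J k" "D k", OF D0] by linarith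
  define A where "A k = ln (c + S k) - h (u k)" for k
  define B where "B k = h (u k) - h m - p * (u k - m)" for k
  have A0: "A k \<ge> 0" if "k \<in> N" for k
  proof -
    have "0 < c + q * exp (u k)" using q cpos by (simp add: add_pos_pos)
    then show ?thesis using Sge[OF that] by (simp add: A_def h_def)
  qed
  have B0: "B k \<ge> 0" for k
    using h_tangent[OF q cpos, of m "u k"] by (simp add: B_def h_def p_def)
  define V where "V = (\<Sum>i=1..n. X i)"
  have sumu: "(\<Sum>k\<in>N. u k) = (inner V V - real n) / (q * \<tau>)"
  proof -
    have "inner V V = (\<Sum>k\<in>N. \<Sum>j\<in>N. s j k)"
      by (simp add: V_def N_def s_def inner_sum_left inner_sum_right)
    also have "\<dots> = (\<Sum>k\<in>N. 1 + (\<Sum>j\<in>J k. s j k))"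
    proof (intro sum.cong refl)
      fix k assume k: "k \<in> N"
      show "(\<Sum>j\<in>N. s j k) = 1 + (\<Sum>j\<in>J k. s j k)"
        using sum.remove[OF finN k, of "\<lambda>j. s j k"] skk[OF k] by (simp add: J_def)
    qed
    also have "\<dots> = real n + (\<Sum>k\<in>N. \<Sum>j\<in>J k. s j k)" by (simp add: sum.distrib N_def)
    finally have "(\<Sum>k\<in>N. \<Sum>j\<in>J k. s j k) = inner V V - real n" by simp
    then show ?thesis by (simp add: u_def sum_divide_distrib[symmetric])
  qed
  have sumum: "(\<Sum>k\<in>N. (u k - m)) = inner V V / (q * \<tau>)"
  proof -
    have "(\<Sum>k\<in>N. (u k - m)) = (\<Sum>k\<in>N. u k) - real n * m" by (simp add: sum_subtractf N_def)
    also have "\<dots> = inner V V / (q * \<tau>)" unfolding sumu m_def using q tau by (simp add: field_simps)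
    finally show ?thesis .
  qed
  have decomp: "loss \<tau> c n X = (\<Sum>k\<in>N. A k) + (\<Sum>k\<in>N. B k) + real n * h m + p * (inner V V / (q * \<tau>))"
  proof -
    have "loss \<tau> c n X = (\<Sum>k\<in>N. A k + B k + h m + p * (u k - m))"
      unfolding lossX by (intro sum.cong) (auto simp: A_def B_def)
    also have "\<dots> = (\<Sum>k\<in>N. A k) + (\<Sum>k\<in>N. B k) + real n * h m + p * (\<Sum>k\<in>N. (u k - m))"
      by (simp add: sum.distrib sum_distrib_left N_def)
    finally show ?thesis using sumum by simp
  qed
  have le: "loss \<tau> c n X \<le> real n * h m" using minX[OF Y(1)] lossY by simp
  have SA: "(\<Sum>k\<in>N. A k) \<ge> 0" using A0 by (intro sum_nonneg) auto
  have SB: "(\<Sum>k\<in>N. B k) \<ge> 0" using B0 by (intro sum_nonneg) auto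
  have VV: "p * (inner V V / (q * \<tau>)) \<ge> 0" using p q tau by simp
  have SA0: "(\<Sum>k\<in>N. A k) = 0" using decomp le SA SB VV by linarith
  have VV0: "p * (inner V V / (q * \<tau>)) = 0" using decomp le SA SB VV by linarith
  have V0: "V = 0" using VV0 p q tau by simp
  have Ak: "A k = 0" if "k \<in> N" for k
  proof -
    have A0': "\<And>x. x \<in> N \<Longrightarrow> 0 \<le> A x" using A0 by blast
    have "\<forall>x\<in>N. A x = 0" using sum_nonneg_eq_0_iff[OF finN A0'] SA0 by simp
    then show ?thesis using that by blast
  qed
  have sjk: "s j k = \<tau> * u k" if "k \<in> N" "j \<in> J k" for j k
  proof -
    have pos1: "0 < c + q * exp (u k)" using q cpos by (simp add: add_pos_pos)
    have pos2: "0 < c + S k" using pos1 Sge[OF that(1)] by linarith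
    have "ln (c + S k) = ln (c + q * exp (u k))" using Ak[OF that(1)] by (simp add: A_def h_def)
    then have "S k = q * exp (u k)" using pos1 pos2 by simp
    then have "(\<Sum>j\<in>J k. D k j) = 0" using sumD[OF that(1)] by simp
    moreover have D0': "\<And>x. x \<in> J k \<Longrightarrow> 0 \<le> D k x" using D0 by blast
    ultimately have "\<forall>x\<in>J k. D k x = 0" using sum_nonneg_eq_0_iff[OF finJ[of k] D0'] by simp
    then have "D k j = 0" using that(2) by blast
    then have "exp (s j k / \<tau>) = exp (u k) * (1 + s j k / \<tau> - u k)" by (simp add: D_def)
    then have "s j k / \<tau> = u k" by (rule exp_tangent_eq)
    then show ?thesis using tau by (simp add: field_simps)
  qed
  have one: "1 \<in> N" using assms by (simp add: N_def)
  have ueq: "u k = u 1" if "k \<in> N" for k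
  proof (cases "k = 1")
    case False
    have "s 1 k = \<tau> * u k" using sjk[OF that] one False by (simp add: J_def)
    moreover have "s k 1 = \<tau> * u 1" using sjk[OF one] that False by (simp add: J_def)
    moreover have "s 1 k = s k 1" by (simp add: s_def inner_commute)
    ultimately show ?thesis using tau by simp
  qed simp
  have "(\<Sum>k\<in>N. u k) = (\<Sum>k\<in>N. u 1)" by (rule sum.cong[OF refl ueq])
  then have "(\<Sum>k\<in>N. u k) = real n * u 1" by (simp add: N_def)
  then have "real n * (\<tau> * (q * u 1)) = real n * (-1)" using sumu V0 q tau by (simp add: field_simps)
  moreover have "real n \<noteq> 0" using assms(1) by simp
  ultimately have "\<tau> * (q * u 1) = -1" by (metis mult_left_cancel)
  then have u1: "u 1 = - 1 / (q * \<tau>)" using q tau by (simp add: field_simps)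
  show ?thesis
  proof (intro conjI ballI impI)
    show "(\<Sum>i=1..n. X i) = 0" using V0 by (simp add: V_def)
  next
    fix i j assume i: "i \<in> {1..n}" and j: "j \<in> {1..n}" and ij: "i \<noteq> j"
    have "s i j = \<tau> * u j" using sjk[of j i] i j ij by (simp add: N_def J_def)
    also have "\<dots> = - 1 / q" using ueq[of j] j u1 tau by (simp add: N_def)
    finally show "inner (X i) (X j) = - 1 / (real n - 1)" by (simp add: s_def q_def)
  qed
qed

end
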